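(* Let $(s,\pi)$ be a plane permutation on $[n]$ with $s=(s_0s_1\cdots s_{n-1})$, let $h=(i,j,j+1,l)$ with $i\le j<j+1\le l$ and $\{i,j,j+1,l\}\subset[n-1]$, and let $(s^h,\pi^h)=\chi_h\circ(s,\pi)$. Below, each $v^r_1,\ldots,v^r_{m_r}$ ($r\in\{i,j,l\}$, $m_r\ge 0$) denotes a (possibly empty) list of further elements. Then, according to how $s_{i-1},s_j,s_l$ lie in the cycles of $\pi$, the cycles of $\pi^h$ containing these elements are as follows: (1) if $\pi$ has cycles $(s_{i-1},v_1^i,\ldots,v_{m_i}^i)$, $(s_j,v_1^j,\ldots,v_{m_j}^j)$, $(s_l,v_1^l,\ldots,v_{m_l}^l)$, then $\pi^h$ has the cycle $(s_{i-1},v_1^j,\ldots,v_{m_j}^j,s_j,v_1^l,\ldots,v_{m_l}^l,s_l,v_1^i,\ldots,v_{m_i}^i)$; (2) if $\pi$ has the cycle $(s_{i-1},v_1^i,\ldots,v_{m_i}^i,s_l,v_1^l,\ldots,v_{m_l}^l,s_j,v_1^j,\ldots,v_{m_j}^j)$, then $\pi^h$ has cycles $(s_{i-1},v_1^j,\ldots,v_{m_j}^j)$, $(s_j,v_1^l,\ldots,v_{m_l}^l)$, $(s_l,v_1^i,\ldots,v_{m_i}^i)$; (3) if $\pi$ has the cycle $(s_{i-1},v_1^i,\ldots,v_{m_i}^i,s_j,v_1^j,\ldots,v_{m_j}^j,s_l,v_1^l,\ldots,v_{m_l}^l)$, then $\pi^h$ has the cycle $(s_{i-1},v_1^j,\ldots,v_{m_j}^j,s_l,v_1^i,\ldots,v_{m_i}^i,s_j,v_1^l,\ldots,v_{m_l}^l)$;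 (4) if $\pi$ has cycles $(s_{i-1},v_1^i,\ldots,v_{m_i}^i,s_j,v_1^j,\ldots,v_{m_j}^j)$, $(s_l,v_1^l,\ldots,v_{m_l}^l)$, then $\pi^h$ has cycles $(s_{i-1},v_1^j,\ldots,v_{m_j}^j)$, $(s_j,v_1^l,\ldots,v_{m_l}^l,s_l,v_1^i,\ldots,v_{m_i}^i)$; (5) if $\pi$ has cycles $(s_{i-1},v_1^i,\ldots,v_{m_i}^i)$, $(s_j,v_1^j,\ldots,v_{m_j}^j,s_l,v_1^l,\ldots,v_{m_l}^l)$, then $\pi^h$ has cycles $(s_{i-1},v_1^j,\ldots,v_{m_j}^j,s_l,v_1^i,\ldots,v_{m_i}^i)$, $(s_j,v_1^l,\ldots,v_{m_l}^l)$; (6) if $\pi$ has cycles $(s_{i-1},v_1^i,\ldots,v_{m_i}^i,s_l,v_1^l,\ldots,v_{m_l}^l)$, $(s_j,v_1^j,\ldots,v_{m_j}^j)$, then $\pi^h$ has cycles $(s_{i-1},v_1^j,\ldots,v_{m_j}^j,s_j,v_1^l,\ldots,v_{m_l}^l)$, $(s_l,v_1^i,\ldots,v_{m_i}^i)$.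
   Context: Permutations of $[n]=\{1,\dots,n\}$ are multiplied as composition of maps, $(\sigma\tau)(x)=\sigma(\tau(x))$. A plane permutation on $[n]$ is a pair $(s,\pi)$ where $s=(s_0s_1\cdots s_{n-1})$ is an $n$-cycle on $[n]$, written with a fixed starting element $s_0$, and $\pi$ is an arbitrary permutation of $[n]$; its diagonal is $D=s\circ\pi^{-1}$. For $h=(i,j,k,l)$ with $i\le j<k\le l$ and $\{i,j,k,l\}\subset[n-1]$, let $s^h$ be the $n$-cycle $(s_0,\dots,s_{i-1},s_k,\dots,s_l,s_{j+1},\dots,s_{k-1},s_i,\dots,s_j,s_{l+1},\dots,s_{n-1})$ obtained by interchanging the blocks $s_i\cdots s_j$ and $s_k\cdots s_l$ (when $k=j+1$ the middle block is empty, and $s^h=(s_0,\dots,s_{i-1},s_k,\dots,s_l,s_i,\dots,s_j,s_{l+1},\dots)$), and let $\pi^h=D^{-1}\circ s^h$, so that $(s^h,\pi^h)$ is a plane permutation with the same diagonal $D$. Write $(s^h,\pi^h)=\chi_h\circ(s,\pi)$; when $k=j+1$, $\chi_h$ is called a transpose. *)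

theory Defs
  imports "HOL-Combinatorics.Combinatorics"
begin

(* The n-cycle s = (s_0 s_1 ... s_{n-1}) is given by the list ss = [s_0,...,s_{n-1}];
   as a map it is cycle_of_list ss (s_t \<mapsto> s_{t+1}, s_{n-1} \<mapsto> s_0). *)

definition blk :: "'a list \<Rightarrow> nat \<Rightarrow> nat \<Rightarrow> 'a list" where
  "blk ss a b = drop a (take (Suc b) ss)"

definition block_swap :: "'a list \<Rightarrow> nat \<Rightarrow> nat \<Rightarrow> nat \<Rightarrow> nat \<Rightarrow> 'a list" where
  "block_swap ss i j k l =
     take i ss @ blk ss k l @ drop (Suc j) (take k ss) @ blk ss i j @ drop (Suc l) ss"

definition diag :: "'a list \<Rightarrow> ('a \<Rightarrow> 'a) \<Rightarrow> 'a \<Rightarrow> 'a" where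
  "diag ss \<pi> = cycle_of_list ss \<circ> inv \<pi>"

definition pi_h :: "'a list \<Rightarrow> ('a \<Rightarrow> 'a) \<Rightarrow> nat \<Rightarrow> nat \<Rightarrow> nat \<Rightarrow> nat \<Rightarrow> 'a \<Rightarrow> 'a" where
  "pi_h ss \<pi> i j k l = inv (diag ss \<pi>) \<circ> cycle_of_list (block_swap ss i j k l)"

definition is_cycle_of :: "('a \<Rightarrow> 'a) \<Rightarrow> 'a list \<Rightarrow> bool" where
  "is_cycle_of p cs \<longleftrightarrow> cs \<noteq> [] \<and> distinct cs \<and>
     (\<forall>t < length cs. p (cs ! t) = cs ! (Suc t mod length cs))"

definition has_cycles :: "('a \<Rightarrow> 'a) \<Rightarrow> 'a list list \<Rightarrow> bool" where
  "has_cycles p Cs \<longleftrightarrow> (\<forall>C \<in> set Cs. is_cycle_of p C) \<and> distinct (concat Cs)"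

end

theory Submission imports Defs begin

fun walk :: "('a \<Rightarrow> 'a) \<Rightarrow> 'a list \<Rightarrow> 'a \<Rightarrow> bool" where
  "walk f [] y = True"
| "walk f (x # xs) y = (f x = hd (xs @ [y]) \<and> walk f xs y)"

lemma walk_append: "walk f (xs @ ys) y = (walk f xs (hd (ys @ [y])) \<and> walk f ys y)"
  by (induction xs) (auto simp: hd_append split: list.splits)

lemma walk_map: "walk f xs y = (map f xs = tl (xs @ [y]))"
  by (induction xs) (auto simp: hd_append tl_append split: list.splits)

lemma walk_cong: "(\<And>x. x \<in> set xs \<Longrightarrow> f x = g x) \<Longrightarrow> walk f xs y = walk g xs y"
  by (induction xs) auto

lemma walk_unique: "walk f xs y \<Longrightarrow> walk g xs y \<Longrightarrow> x \<in> set xs \<Longrightarrow> f x = g x"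
  by (induction xs) auto

lemma walk_nth: "walk f xs y = (\<forall>t<length xs. f (xs ! t) = (xs @ [y]) ! Suc t)"
proof -
  have "map f xs = tl (xs @ [y]) \<longleftrightarrow> (\<forall>t<length xs. map f xs ! t = tl (xs @ [y]) ! t)"
    by (subst list_eq_iff_nth_eq) simp
  also have "\<dots> \<longleftrightarrow> (\<forall>t<length xs. f (xs ! t) = (xs @ [y]) ! Suc t)"
    by (simp add: nth_tl)
  finally show ?thesis unfolding walk_map .
qed

lemma is_cycle_walk: "is_cycle_of p cs = (cs \<noteq> [] \<and> distinct cs \<and> walk p cs (hd cs))"
proof -
  have "cs \<noteq> [] \<Longrightarrow> t < length cs \<Longrightarrow> (cs @ [hd cs]) ! Suc t = cs ! (Suc t mod length cs)" for t
    by (cases "Suc t = length cs") (auto simp: nth_append hd_conv_nth)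
  then show ?thesis unfolding is_cycle_of_def walk_nth by auto
qed

lemma walk_cycle: "distinct cs \<Longrightarrow> cs \<noteq> [] \<Longrightarrow> walk (cycle_of_list cs) cs (hd cs)"
  using cyclic_rotation[of cs 1] 
  by (simp add: walk_map rotate1_hd_tl)

lemma decomp:
  assumes "1 \<le> i" "i \<le> j" "j + 1 \<le> l" "l < length ss"
  shows "ss = take (i-1) ss @ ss!(i-1) # drop i (take j ss) @ ss!j # drop (j+1) (take l ss) @ ss!l # drop (l+1) ss"
proof -
  have 1: "ss = take l ss @ ss!l # drop (Suc l) ss"
    by (rule id_take_nth_drop) (use assms in simp)
  have "take l ss = take j (take l ss) @ (take l ss)!j # drop (Suc j) (take l ss)"
    by (rule id_take_nth_drop) (use assms in simp)
  also have "\<dots> = take j ss @ ss!j # drop (j+1) (take l ss)"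
    using assms by (simp add: min_def)
  finally have 2: "take l ss = take j ss @ ss!j # drop (j+1) (take l ss)" .
  have "take j ss = take (i-1) (take j ss) @ (take j ss)!(i-1) # drop (Suc (i-1)) (take j ss)"
    by (rule id_take_nth_drop) (use assms in simp)
  also have "\<dots> = take (i-1) ss @ ss!(i-1) # drop i (take j ss)"
  proof -
    have "i - 1 \<le> j" "i - 1 < j" "Suc (i-1) = i" using assms by linarith+
    then show ?thesis by (simp add: min_def)
  qed
  finally have 3: "take j ss = take (i-1) ss @ ss!(i-1) # drop i (take j ss)" .
  have "ss = take l ss @ ss!l # drop (Suc l) ss" by (fact 1)
  also have "\<dots> = (take j ss @ ss!j # drop (j+1) (take l ss)) @ ss!l # drop (Suc l) ss"
    by (subst 2) (rule refl)
  also have "\<dots> = ((take (i-1) ss @ ss!(i-1) # drop i (take j ss)) @ ss!j # drop (j+1) (take l ss)) @ ss!l # drop (Suc l) ss"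
    by (subst 3) (rule refl)
  finally show ?thesis by simp
qed

lemma bswap:
  assumes "length A0 = i - 1" "length C0 = j - i" "length B0 = l - j - 1"
    "1 \<le> i" "i \<le> j" "j + 1 \<le> l"
  shows "block_swap (A0 @ a # C0 @ b # B0 @ c # D) i j (j+1) l = A0 @ a # B0 @ c # C0 @ b # D"
  using assms by (simp add: block_swap_def blk_def take_append drop_append Suc_diff_le)

theorem lemma2:
  fixes n i j l :: nat and ss :: "nat list" and \<pi> :: "nat \<Rightarrow> nat"
  assumes ss: "distinct ss" "set ss = {1..n}"
    and pi: "\<pi> permutes {1..n}"
    and h: "1 \<le> i" "i \<le> j" "j + 1 \<le> l" "l \<le> n - 1"
  defines "\<pi>h \<equiv> pi_h ss \<pi> i j (j + 1) l"
  shows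
   "(\<forall>vi vj vl.
      has_cycles \<pi> [ss!(i-1) # vi, ss!j # vj, ss!l # vl] \<longrightarrow>
      has_cycles \<pi>h [ss!(i-1) # vj @ ss!j # vl @ ss!l # vi])
  \<and> (\<forall>vi vj vl.
      has_cycles \<pi> [ss!(i-1) # vi @ ss!l # vl @ ss!j # vj] \<longrightarrow>
      has_cycles \<pi>h [ss!(i-1) # vj, ss!j # vl, ss!l # vi])
  \<and> (\<forall>vi vj vl.
      has_cycles \<pi> [ss!(i-1) # vi @ ss!j # vj @ ss!l # vl] \<longrightarrow>
      has_cycles \<pi>h [ss!(i-1) # vj @ ss!l # vi @ ss!j # vl])
  \<and> (\<forall>vi vj vl.
      has_cycles \<pi> [ss!(i-1) # vi @ ss!j # vj, ss!l # vl] \<longrightarrow>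
      has_cycles \<pi>h [ss!(i-1) # vj, ss!j # vl @ ss!l # vi])
  \<and> (\<forall>vi vj vl.
      has_cycles \<pi> [ss!(i-1) # vi, ss!j # vj @ ss!l # vl] \<longrightarrow>
      has_cycles \<pi>h [ss!(i-1) # vj @ ss!l # vi, ss!j # vl])
  \<and> (\<forall>vi vj vl.
      has_cycles \<pi> [ss!(i-1) # vi @ ss!l # vl, ss!j # vj] \<longrightarrow>
      has_cycles \<pi>h [ss!(i-1) # vj @ ss!j # vl, ss!l # vi])"
proof -
  have len: "length ss = n" using ss distinct_card[OF ss(1)] by simp
  have ln: "l < length ss" using len h by simp
  define a where "a = ss!(i-1)"
  define b where "b = ss!j"
  define c where "c = ss!l"
  define A0 where "A0 = take (i-1) ss"
  define C0 where "C0 = drop i (take j ss)"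
  define B0 where "B0 = drop (j+1) (take l ss)"
  define D where "D = drop (l+1) ss"
  have dec: "ss = A0 @ a # C0 @ b # B0 @ c # D"
    unfolding A0_def C0_def B0_def D_def a_def b_def c_def
    using decomp[OF h(1,2,3) ln] .
  have lens: "length A0 = i - 1" "length C0 = j - i" "length B0 = l - j - 1"
    unfolding A0_def C0_def B0_def using h ln by auto
  define ts where "ts = A0 @ a # B0 @ c # C0 @ b # D"
  have bs: "block_swap ss i j (j+1) l = ts"
    unfolding ts_def by (subst dec) (rule bswap[OF lens h(1,2,3)])
  define s where "s = cycle_of_list ss"
  define s' where "s' = cycle_of_list ts"
  have dss: "distinct (A0 @ a # C0 @ b # B0 @ c # D)" using ss(1) dec by simp
  have dts: "distinct ts" using dss unfolding ts_def by auto
  have setts: "set ts = set ss" unfolding ts_def by (subst dec) auto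
  define \<sigma> where "\<sigma> = (\<lambda>x. if x = a then b else if x = b then c else if x = c then a else x)"
  have bijs: "bij s" unfolding s_def using permutation_bijective[OF permutation_of_cycle] .
  have bijp: "bij \<pi>" using pi permutes_bij by blast
  have pih: "\<pi>h = \<pi> \<circ> inv s \<circ> s'"
    unfolding \<pi>h_def pi_h_def diag_def bs s_def[symmetric] s'_def[symmetric]
    using bijs bijp by (simp add: o_inv_distrib bij_imp_bij_inv inv_inv_eq o_assoc)
  have key: "s' x = s (\<sigma> x)" for x
  proof (cases "x \<in> set ss")
    case False
    then have "x \<noteq> a" "x \<noteq> b" "x \<noteq> c" by (subst (asm) dec, auto)+
    then show ?thesis using False setts unfolding s_def s'_def \<sigma>_def
      by (simp add: id_outside_supp)
  next
    case True
    have w1: "walk s' ts (hd ts)" unfolding s'_def using walk_cycle[OF dts] ts_def by simp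
    have ws: "walk s ss (hd ss)" unfolding s_def using walk_cycle[OF ss(1)] dec by simp
    have hh: "hd ss = hd ts" by (subst dec) (simp add: ts_def hd_append)
    have nm: "a \<notin> set A0 \<and> b \<notin> set A0 \<and> c \<notin> set A0 \<and> a \<notin> set B0 \<and> b \<notin> set B0 \<and> c \<notin> set B0
      \<and> a \<notin> set C0 \<and> b \<notin> set C0 \<and> c \<notin> set C0 \<and> a \<notin> set D \<and> b \<notin> set D \<and> c \<notin> set D
      \<and> a \<noteq> b \<and> a \<noteq> c \<and> b \<noteq> c"
      using dss by auto
    have cg: "walk (s \<circ> \<sigma>) X y = walk s X y" if "a \<notin> set X" "b \<notin> set X" "c \<notin> set X" for X y
      by (rule walk_cong) (use that in \<open>auto simp: \<sigma>_def\<close>)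
    have w2: "walk (s \<circ> \<sigma>) ts (hd ts)"
      using ws nm unfolding hh unfolding ts_def
      apply (subst (asm) dec)
      apply (simp add: walk_append cg)
      apply (simp add: \<sigma>_def hd_append)
      done
    show ?thesis using walk_unique[OF w1 w2] True setts by simp
  qed
  have injs: "inj s" using bijs bij_is_inj by blast
  have pix: "\<pi>h x = \<pi> (\<sigma> x)" for x
    unfolding pih using key[of x] injs by (simp add: inv_f_f[OF injs, symmetric])
  have abc: "a \<noteq> b" "a \<noteq> c" "b \<noteq> c" using dss by auto
  have pa: "\<pi>h a = \<pi> b" "\<pi>h b = \<pi> c" "\<pi>h c = \<pi> a" using pix abc by (auto simp: \<sigma>_def)
  have cg: "walk \<pi>h X y = walk \<pi> X y" if "a \<notin> set X" "b \<notin> set X" "c \<notin> set X" for X y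
    by (rule walk_cong) (use that pix in \<open>auto simp: \<sigma>_def\<close>)
  note defs = a_def[symmetric] b_def[symmetric] c_def[symmetric]
  show ?thesis
    unfolding defs has_cycles_def is_cycle_walk
    apply (intro conjI allI impI)
         apply (simp_all add: walk_append)
         apply ((clarsimp simp: cg pa hd_append; fail) | (auto simp: cg pa hd_append)[1])+
    done
qed

end
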